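(* Let $p$ be an odd prime and let $a,b,c$ be positive integers such that $c$ is a primitive divisor of $p^a-1$ and $bc$ is a primitive divisor of $p^{ab}-1$. If $bc$ is odd, then $$\Gamma\Big(\tfrac{p^{ab}-1}{bc},\,p^{ab}\Big)\;\cong\;\vec{\square}^{\,b}\,\Gamma\Big(\tfrac{p^a-1}{c},\,p^a\Big),$$ the directed Cartesian product of $b$ copies of $\Gamma(\tfrac{p^a-1}{c},p^a)$.
   Context: An integer $e$ is a primitive divisor of $p^a-1$ if $e\mid p^a-1$ and $e\nmid p^t-1$ for every $1\le t<a$. For a prime power $q$ and $k\mid q-1$, the generalized Paley graph $\Gamma(k,q)$ is the Cayley digraph $\mathrm{Cay}(\mathbb{F}_q,R_k)$ with $R_k=\{x^k:x\in\mathbb{F}_q^*\}$: vertex set $\mathbb{F}_q$, with an arc from $u$ to $v$ iff $v-u\in R_k$ (two opposite arcs are regarded as one undirected edge). The directed Cartesian product $\Gamma_1\,\vec{\square}\cdots\vec{\square}\,\Gamma_b$ of digraphs has vertex set $V(\Gamma_1)\times\cdots\times V(\Gamma_b)$, with an arc from $(v_i)$ to $(w_i)$ iff there is exactly one $j$ with $v_jw_j$ an arc of $\Gamma_j$ and $v_i=w_i$ for all $i\ne j$. *)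

theory Defs
  imports "HOL-Library.FuncSet" "HOL-Computational_Algebra.Primes"
begin

definition primitive_divisor :: "nat \<Rightarrow> nat \<Rightarrow> nat \<Rightarrow> bool" where
  "primitive_divisor p a e \<longleftrightarrow>
     e dvd p ^ a - 1 \<and> (\<forall>t. 1 \<le> t \<and> t < a \<longrightarrow> \<not> e dvd p ^ t - 1)"

text \<open>Arc relation of the generalized Paley graph Gamma(k,q) = Cay(F_q, R_k),
  where F_q is the finite field given by the type 'a.\<close>
definition gpaley_arc :: "nat \<Rightarrow> 'a::field \<Rightarrow> 'a \<Rightarrow> bool" where
  "gpaley_arc k u v \<longleftrightarrow> (\<exists>x. x \<noteq> 0 \<and> v - u = x ^ k)"

text \<open>Vertex set and arc relation of the directed Cartesian product of b copies
  of a digraph with vertex set UNIV and arc relation A; vertices are b-tuples,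
  represented as extensional functions on {..<b}.\<close>
definition cart_power_verts :: "nat \<Rightarrow> (nat \<Rightarrow> 'a) set" where
  "cart_power_verts b = PiE {..<b} (\<lambda>_. UNIV)"

definition cart_power_arc :: "nat \<Rightarrow> ('a \<Rightarrow> 'a \<Rightarrow> bool) \<Rightarrow> (nat \<Rightarrow> 'a) \<Rightarrow> (nat \<Rightarrow> 'a) \<Rightarrow> bool" where
  "cart_power_arc b A v w \<longleftrightarrow>
     (\<exists>!j. j < b \<and> A (v j) (w j) \<and> (\<forall>i<b. i \<noteq> j \<longrightarrow> v i = w i))"

definition digraph_iso :: "('a \<Rightarrow> 'a \<Rightarrow> bool) \<Rightarrow> 'b set \<Rightarrow> ('b \<Rightarrow> 'b \<Rightarrow> bool) \<Rightarrow> bool" where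
  "digraph_iso A V B \<longleftrightarrow>
     (\<exists>f. bij_betw f UNIV V \<and> (\<forall>u v. A u v \<longleftrightarrow> B (f u) (f v)))"

end

theory Submission
  imports Defs "HOL-Number_Theory.Residues" "HOL-Computational_Algebra.Polynomial"
begin

definition tring :: "'a::field ring" where
  "tring = \<lparr>carrier = UNIV, monoid.mult = (\<lambda>x y. x * y), one = 1, ring.zero = 0, add = (\<lambda>x y. x + y)\<rparr>"

lemma tring_field: "field (tring :: 'a::field ring)"
proof -
  have "\<exists>y. x + y = 0" for x :: 'a
    using add.right_inverse by blast
  moreover have "x \<noteq> 0 \<Longrightarrow> \<exists>y. x * y = 1" for x :: 'a
    by (rule exI[of _ "inverse x"]) auto
  ultimately show ?thesis
    unfolding tring_def
    by unfold_locales (auto simp: algebra_simps Units_def)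
qed

lemma gen_exists0:
  assumes "finite (UNIV :: 'a::field set)"
  shows "\<exists>g::'a. \<forall>x. x \<noteq> 0 \<longrightarrow> (\<exists>i::nat. x = g ^ i)"
proof -
  define R where "R = (tring :: 'a ring)"
  interpret R: field R unfolding R_def by (rule tring_field)
  have fin: "finite (carrier R)" using assms by (simp add: R_def tring_def)
  have pw: "x [^]\<^bsub>R\<^esub> (n::nat) = x ^ n" for x :: 'a and n
    by (induct n) (simp_all add: R_def tring_def mult.commute)
  from R.finite_field_mult_group_has_gen[OF fin]
  obtain a where a: "a \<in> carrier (mult_of R)" "carrier (mult_of R) = {a[^]\<^bsub>R\<^esub>i | i::nat . i \<in> UNIV}"
    by (rule bexE)
  have "\<forall>x::'a. x \<noteq> 0 \<longrightarrow> (\<exists>i::nat. x = a ^ i)"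
  proof (intro allI impI)
    fix x :: 'a assume "x \<noteq> 0"
    hence "x \<in> carrier (mult_of R)" by (simp add: R_def tring_def)
    hence "x \<in> {a[^]\<^bsub>R\<^esub>i | i::nat . i \<in> UNIV}" unfolding a(2) .
    hence "\<exists>i::nat. x = a[^]\<^bsub>R\<^esub>i" unfolding mem_Collect_eq by blast
    then obtain i :: nat where "x = a[^]\<^bsub>R\<^esub>i" by blast
    hence "x = a ^ i" by (simp add: pw)
    thus "\<exists>i::nat. x = a ^ i" by blast
  qed
  thus ?thesis by blast
qed

lemma gen_exists:
  assumes "finite (UNIV :: 'a::field set)"
  shows "\<exists>g::'a. g \<noteq> 0 \<and> (\<forall>x. x \<noteq> 0 \<longrightarrow> (\<exists>i::nat. x = g ^ i))"
proof -
  obtain g :: 'a where g: "\<forall>x. x \<noteq> 0 \<longrightarrow> (\<exists>i::nat. x = g ^ i)" using gen_exists0[OF assms] by blast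
  show ?thesis
  proof (cases "g = 0")
    case True
    have "\<forall>x::'a. x \<noteq> 0 \<longrightarrow> (\<exists>i::nat. x = 1 ^ i)"
    proof (intro allI impI)
      fix x :: 'a assume "x \<noteq> 0"
      then obtain i where "x = g ^ i" using g by blast
      with True \<open>x \<noteq> 0\<close> have "x = 1" by (cases i) auto
      thus "\<exists>i::nat. x = 1 ^ i" by auto
    qed
    thus ?thesis by (intro exI[of _ 1]) auto
  qed (use g in auto)
qed

lemma pow_mod:
  fixes z :: "'a::monoid_mult"
  assumes "z ^ N = 1" shows "z ^ m = z ^ (m mod N)"
proof -
  have "z ^ m = z ^ (N * (m div N) + m mod N)" by simp
  also have "\<dots> = (z ^ N) ^ (m div N) * z ^ (m mod N)" by (simp only: power_add power_mult)
  finally show ?thesis using assms by simp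
qed

definition ordz :: "'a::monoid_mult \<Rightarrow> nat \<Rightarrow> bool" where
  "ordz z N \<longleftrightarrow> N > 0 \<and> z ^ N = 1 \<and> inj_on (\<lambda>i. z ^ i) {..<N}"

lemma ordz_eq:
  assumes "ordz z N" shows "z ^ m = z ^ m' \<longleftrightarrow> m mod N = m' mod N"
proof
  assume "z ^ m = z ^ m'"
  hence "z ^ (m mod N) = z ^ (m' mod N)" using pow_mod assms by (metis ordz_def)
  moreover have "m mod N < N" "m' mod N < N" using assms by (auto simp: ordz_def)
  ultimately show "m mod N = m' mod N" using assms unfolding ordz_def inj_on_def by blast
next
  assume "m mod N = m' mod N" thus "z ^ m = z ^ m'" using pow_mod assms by (metis ordz_def)
qed

lemma ordz_one:
  assumes "ordz z N" shows "z ^ m = 1 \<longleftrightarrow> N dvd m"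
  using ordz_eq[OF assms, of m 0] by (simp add: dvd_eq_mod_eq_0)

lemma field_pow_card:
  fixes x :: "'a :: {finite,field}"
  shows   "x ^ card (UNIV :: 'a set) = x"
proof (cases "x = 0")
  case False
  have "x * (\<Prod>y\<in>UNIV-{0}. x * y) = x * x ^ (card (UNIV :: 'a set) - 1) * \<Prod>(UNIV-{0})"
    by (simp add: prod.distrib mult_ac)
  also have "x * x ^ (card (UNIV :: 'a set) - 1) = x ^ Suc (card (UNIV :: 'a set) - 1)"
    by (subst power_Suc) auto
  also have "Suc (card (UNIV :: 'a set) - 1) = card (UNIV :: 'a set)"
    using finite_UNIV_card_ge_0[where ?'a = 'a] by simp
  also have "(\<Prod>y\<in>UNIV-{0}. x * y) = (\<Prod>y\<in>UNIV-{0}. y)"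
    by (rule prod.reindex_bij_witness[of _ "\<lambda>y. y / x" "\<lambda>y. x * y"]) (use False in auto)
  finally show ?thesis
    by simp
qed (use finite_UNIV_card_ge_0[where ?'a = 'a] in auto)

lemma field_pow_card1:
  fixes x :: "'a :: {finite,field}"
  assumes "x \<noteq> 0" shows "x ^ (card (UNIV :: 'a set) - 1) = 1"
proof -
  have pos: "card (UNIV :: 'a set) > 0" by (simp add: finite_UNIV_card_ge_0)
  obtain m where m: "card (UNIV :: 'a set) = Suc m" using pos by (cases "card (UNIV :: 'a set)") auto
  have "x * x ^ m = x * 1" using field_pow_card[of x] unfolding m by simp
  hence "x ^ m = 1" using assms by simp
  thus ?thesis using m by simp
qed

lemma card_field_ge2: "card (UNIV :: 'a::{finite,field} set) \<ge> 2"
proof -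
  have "card {0::'a, 1} \<le> card (UNIV :: 'a set)" by (rule card_mono) auto
  thus ?thesis by simp
qed

lemma roots_of_unity:
  fixes k n :: nat
  assumes kn: "k * n = card (UNIV::'a::{finite,field} set) - 1" and n: "n > 0"
  shows "\<exists>z::'a. ordz z n \<and> (\<forall>y::'a. (\<exists>s. s \<noteq> 0 \<and> y = s ^ k) \<longleftrightarrow> y ^ n = 1)
                 \<and> (\<forall>y::'a. y ^ n = 1 \<longrightarrow> (\<exists>m. y = z ^ m))"
proof -
  define N where "N = card (UNIV::'a set) - 1"
  have N2: "card (UNIV::'a set) \<ge> 2" by (rule card_field_ge2)
  have N0: "N > 0" unfolding N_def using N2 by linarith
  obtain g :: 'a where g0: "g \<noteq> 0" and g: "\<forall>x. x \<noteq> 0 \<longrightarrow> (\<exists>i::nat. x = g ^ i)"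
    using gen_exists[OF finite_UNIV] by blast
  have gN: "g ^ N = 1" unfolding N_def using field_pow_card1 g0 by blast
  have img: "(\<lambda>i. g ^ i) ` {..<N} = UNIV - {0}"
  proof
    show "(\<lambda>i. g ^ i) ` {..<N} \<subseteq> UNIV - {0}" using g0 by auto
    show "UNIV - {0} \<subseteq> (\<lambda>i. g ^ i) ` {..<N}"
    proof
      fix x assume "x \<in> (UNIV::'a set) - {0}"
      then obtain i where "x = g ^ i" using g by blast
      hence "x = g ^ (i mod N)" using pow_mod[OF gN] by simp
      thus "x \<in> (\<lambda>i. g ^ i) ` {..<N}" using N0 by auto
    qed
  qed
  have "inj_on (\<lambda>i. g ^ i) {..<N}"
  proof (rule eq_card_imp_inj_on)
    show "finite {..<N}" by simp
    have "card ((\<lambda>i. g ^ i) ` {..<N}) = card (UNIV - {0::'a})" by (simp add: img)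
    also have "\<dots> = N" by (simp add: N_def card_Diff_singleton)
    finally show "card ((\<lambda>i. g ^ i) ` {..<N}) = card {..<N}" by simp
  qed
  hence og: "ordz g N" using N0 gN by (simp add: ordz_def)
  have kN: "k * n = N" using kn by (simp add: N_def)
  hence k0: "k > 0" using N0 by (cases k) auto
  define z where "z = g ^ k"
  have oz: "ordz z n"
    unfolding ordz_def
  proof (intro conjI)
    show "0 < n" by fact
    show "z ^ n = 1" using gN kN by (simp add: z_def flip: power_mult)
    show "inj_on (\<lambda>i. z ^ i) {..<n}"
    proof (rule inj_onI)
      fix i j assume ij: "i \<in> {..<n}" "j \<in> {..<n}" "z ^ i = z ^ j"
      hence "g ^ (k * i) = g ^ (k * j)" by (simp add: z_def power_mult)
      hence "(k * i) mod N = (k * j) mod N" using ordz_eq[OF og] by blast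
      moreover have "k * i < N" "k * j < N" using ij kN k0 by auto
      ultimately show "i = j" using k0 by simp
    qed
  qed
  have eqv: "(\<exists>s. s \<noteq> 0 \<and> y = s ^ k) \<longleftrightarrow> y ^ n = 1" for y :: 'a
  proof
    assume "\<exists>s. s \<noteq> 0 \<and> y = s ^ k"
    then obtain s where s: "s \<noteq> 0" "y = s ^ k" by blast
    have "y ^ n = s ^ (k * n)" unfolding s(2) by (rule power_mult[symmetric])
    hence "y ^ n = s ^ N" using kN by simp
    thus "y ^ n = 1" using field_pow_card1[OF s(1)] by (simp add: N_def)
  next
    assume y: "y ^ n = 1"
    hence "y \<noteq> 0" using n by (cases n) auto
    then obtain i where i: "y = g ^ i" using g by blast
    hence "g ^ (i * n) = 1" using y by (simp add: power_mult)
    hence "k * n dvd i * n" using ordz_one[OF og] kN by simp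
    hence "k dvd i" using n by simp
    then obtain j where "i = k * j" by blast
    hence "y = (g ^ j) ^ k" using i by (simp add: power_mult mult.commute)
    moreover have "g ^ j \<noteq> 0" using g0 by simp
    ultimately show "\<exists>s. s \<noteq> 0 \<and> y = s ^ k" by blast
  qed
  have gen: "\<exists>m. y = z ^ m" if y: "y ^ n = 1" for y :: 'a
  proof -
    have "y \<noteq> 0" using y n by (cases n) auto
    then obtain i where i: "y = g ^ i" using g by blast
    hence "g ^ (i * n) = 1" using y by (simp add: power_mult)
    hence "k * n dvd i * n" using ordz_one[OF og] kN by simp
    hence "k dvd i" using n by simp
    then obtain j where "i = k * j" by blast
    hence "y = z ^ j" using i by (simp add: z_def power_mult)
    thus ?thesis by blast
  qed
  have B: "\<forall>y::'a. (\<exists>s. s \<noteq> 0 \<and> y = s ^ k) \<longleftrightarrow> y ^ n = 1" using eqv by simp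
  have C: "\<forall>y::'a. y ^ n = 1 \<longrightarrow> (\<exists>m. y = z ^ m)" by (intro allI impI) (rule gen)
  show ?thesis by (intro exI[of _ z] conjI oz B C)
qed

lemma card_unity_le:
  assumes "n > 0" shows "card {y::'a::field. y ^ n = 1} \<le> n"
proof -
  define P where "P = Polynomial.monom (1::'a) n + (- 1)"
  have deg: "degree P = n" unfolding P_def
    using assms by (subst degree_add_eq_left) (auto simp: degree_monom_eq)
  hence P0: "P \<noteq> 0" using assms by auto
  have "{y::'a. y ^ n = 1} = {y. poly P y = 0}" by (auto simp: P_def poly_monom)
  thus ?thesis using card_poly_roots_bound[OF P0] deg by simp
qed

lemma CHAR_eq:
  assumes "prime p" "card (UNIV::'a::{finite,field} set) = p ^ m"
  shows "CHAR('a) = p"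
proof -
  have pos: "CHAR('a) > 0" by (rule finite_imp_CHAR_pos) simp
  have pr: "prime CHAR('a)" using prime_CHAR_semidom pos by blast
  have "CHAR('a) dvd p ^ m" using CHAR_dvd_CARD[where 'a='a] assms by metis
  hence "CHAR('a) dvd p" using prime_dvd_power pr by blast
  thus ?thesis using primes_dvd_imp_eq pr assms(1) by blast
qed

lemma frob_int:
  fixes n :: int
  assumes "prime CHAR('a::comm_ring_1)"
  shows "(of_int n :: 'a) ^ CHAR('a) = of_int n"
proof -
  have nat: "(of_nat m :: 'a) ^ CHAR('a) = of_nat m" for m
  proof -
    have "(of_nat m::'a) = (\<Sum>i<m. 1)" by simp
    moreover have "(\<Sum>i<m. (1::'a)) ^ CHAR('a) = (\<Sum>i<m. 1 ^ CHAR('a))"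
      by (rule freshmans_dream_sum[OF assms refl])
    ultimately show ?thesis by simp
  qed
  have cp: "CHAR('a) > 0" using assms prime_gt_0_nat by blast
  have "(of_int n :: 'a) = of_int (n mod int CHAR('a))"
    by (simp add: of_int_eq_iff_cong_CHAR cong_def)
  also have "\<dots> = of_nat (nat (n mod int CHAR('a)))" using cp by simp
  finally show ?thesis using nat by simp
qed

lemma indep:
  fixes z :: "'a::field" and l :: "nat \<Rightarrow> 'a"
  assumes Q: "Q > 0" and frob: "\<And>x y::'a. (x + y) ^ Q = x ^ Q + y ^ Q"
    and fx: "\<And>i. i < n \<Longrightarrow> l i ^ Q = l i"
    and inj: "inj_on (\<lambda>t. z ^ (Q ^ t)) {..<n}"
    and sum0: "(\<Sum>i<n. l i * z ^ i) = 0"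
  shows "\<forall>i<n. l i = 0"
proof -
  have fsum: "(\<Sum>i\<in>A. f i) ^ Q = (\<Sum>i\<in>A. f i ^ Q)" for A :: "nat set" and f :: "nat \<Rightarrow> 'a"
    by (induct A rule: infinite_finite_induct) (simp_all add: frob Q)
  define P where "P = (\<Sum>i<n. Polynomial.monom (l i) i)"
  have polyP: "poly P x = (\<Sum>i<n. l i * x ^ i)" for x by (simp add: P_def poly_sum poly_monom)
  have coeffP: "coeff P j = (if j < n then l j else 0)" for j
    by (simp add: P_def coeff_sum coeff_monom)
  have step: "poly P (w ^ Q) = (poly P w) ^ Q" for w
  proof -
    have "poly P (w ^ Q) = (\<Sum>i<n. l i * (w ^ Q) ^ i)" by (rule polyP)
    also have "\<dots> = (\<Sum>i<n. (l i * w ^ i) ^ Q)"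
      by (intro sum.cong refl) (simp add: fx power_mult_distrib mult.commute flip: power_mult)
    also have "\<dots> = (\<Sum>i<n. l i * w ^ i) ^ Q" by (rule fsum[symmetric])
    finally show ?thesis by (simp add: polyP)
  qed
  have roots: "poly P (z ^ (Q ^ t)) = 0" for t
  proof (induct t)
    case 0 show ?case using sum0 by (simp add: polyP)
  next
    case (Suc t)
    have "z ^ (Q ^ Suc t) = (z ^ (Q ^ t)) ^ Q" by (simp add: mult.commute flip: power_mult)
    thus ?case using step Suc Q by simp
  qed
  have "P = 0"
  proof (rule ccontr)
    assume P0: "P \<noteq> 0"
    hence n0: "n > 0" by (cases n) (auto simp: P_def)
    have "n = card ((\<lambda>t. z ^ (Q ^ t)) ` {..<n})" using inj by (simp add: card_image)
    also have "\<dots> \<le> card {x. poly P x = 0}"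
      by (rule card_mono) (use poly_roots_finite[OF P0] roots in auto)
    also have "\<dots> \<le> degree P" by (rule card_poly_roots_bound[OF P0])
    also have "degree P \<le> n - 1" by (rule degree_le) (auto simp: coeffP)
    finally show False using n0 by simp
  qed
  thus ?thesis using coeffP by (metis coeff_0)
qed

lemma frob_dist:
  assumes oz: "ordz z N" and cop: "coprime N Q" and Q: "Q > 0"
    and prim: "\<And>u. 1 \<le> u \<Longrightarrow> u < n \<Longrightarrow> \<not> N dvd Q ^ u - 1"
  shows "inj_on (\<lambda>t. z ^ (Q ^ t)) {..<n}"
proof -
  have H: False if st: "s < t" "t < n" and e: "z ^ (Q ^ s) = z ^ (Q ^ t)" for s t
  proof -
    have m: "Q ^ t mod N = Q ^ s mod N" using ordz_eq[OF oz] e by metis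
    have le: "Q ^ s \<le> Q ^ t" using Q st by (simp add: power_increasing)
    hence "N dvd Q ^ t - Q ^ s" using m mod_eq_dvd_iff_nat by blast
    moreover have "Q ^ t - Q ^ s = Q ^ s * (Q ^ (t - s) - 1)"
      using st by (simp add: diff_mult_distrib2 flip: power_add)
    ultimately have "N dvd Q ^ s * (Q ^ (t - s) - 1)" by simp
    moreover have "coprime N (Q ^ s)" using cop by simp
    ultimately have "N dvd Q ^ (t - s) - 1" using coprime_dvd_mult_right_iff by blast
    moreover have "1 \<le> t - s" "t - s < n" using st by auto
    ultimately show False using prim by blast
  qed
  show ?thesis
  proof (rule inj_onI)
    fix s t assume "s \<in> {..<n}" "t \<in> {..<n}" "z ^ (Q ^ s) = z ^ (Q ^ t)"
    thus "s = t" using H[of s t] H[of t s] by (cases s t rule: linorder_cases) auto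
  qed
qed


abbreviation mp :: "int poly \<Rightarrow> 'a::comm_ring_1 poly" where "mp \<equiv> map_poly of_int"

lemma mp_add: "(mp (P + Q) :: 'a::comm_ring_1 poly) = mp P + mp Q"
  by (rule poly_eqI) (simp add: coeff_map_poly)
lemma mp_diff: "(mp (P - Q) :: 'a::comm_ring_1 poly) = mp P - mp Q"
  by (rule poly_eqI) (simp add: coeff_map_poly)
lemma mp_mult: "(mp (P * Q) :: 'a::comm_ring_1 poly) = mp P * mp Q"
  by (rule poly_eqI) (simp add: coeff_map_poly coeff_mult)
lemma mp_one: "(mp 1 :: 'a::comm_ring_1 poly) = 1"
  by simp

lemma mp_sum_monom:
  "poly (mp (\<Sum>i<n. Polynomial.monom (f i) i) :: 'a::comm_ring_1 poly) x = (\<Sum>i<n. of_int (f i) * x ^ i)"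
proof -
  have "(mp (\<Sum>i<n. Polynomial.monom (f i) i) :: 'a poly) = (\<Sum>i<n. Polynomial.monom (of_int (f i)) i)"
    by (induct n) (simp_all add: mp_add map_poly_monom)
  thus ?thesis by (simp add: poly_sum poly_monom)
qed

lemma poly_as_sum:
  assumes "T = 0 \<or> degree T < a"
  shows "T = (\<Sum>i<a. Polynomial.monom (coeff T i) i)"
proof (rule poly_eqI)
  fix j
  have "coeff T j = 0" if "j \<ge> a" using assms that by (auto intro: coeff_eq_0)
  thus "coeff T j = coeff (\<Sum>i<a. Polynomial.monom (coeff T i) i) j"
    by (auto simp: coeff_sum coeff_monom)
qed

lemma poly_mp_small:
  assumes "T = 0 \<or> degree T < a"
  shows "poly (mp T :: 'a::comm_ring_1 poly) x = (\<Sum>i<a. of_int (coeff T i) * x ^ i)"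
  using mp_sum_monom[of "\<lambda>i. coeff T i" a x] poly_as_sum[OF assms] by simp

lemma monic_div:
  fixes D G :: "int poly"
  assumes "lead_coeff G = 1"
  shows "\<exists>S T. D = G * S + T \<and> (T = 0 \<or> degree T < degree G)"
proof -
  have G0: "G \<noteq> 0" using assms by auto
  obtain S T where st: "pseudo_divmod D G = (S, T)" by (cases "pseudo_divmod D G") auto
  from pseudo_divmod[OF G0 st] assms show ?thesis by auto
qed

lemma embed:
  fixes \<omega> :: "'K::field" and \<omega>' :: "'F::field" and G :: "int poly"
  assumes surj: "\<And>x. \<exists>P. poly (mp P) \<omega> = x"
    and G1: "lead_coeff G = 1" and G2: "degree G = a"
    and G3: "poly (mp G) \<omega> = 0" and G4: "poly (mp G) \<omega>' = 0"
    and ind: "\<And>T. T = 0 \<or> degree T < a \<Longrightarrow> poly (mp T) \<omega> = 0 \<Longrightarrow> \<forall>i. (of_int (coeff T i) :: 'F) = 0"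
  shows "\<exists>\<psi>::'K \<Rightarrow> 'F. \<psi> 1 = 1 \<and> (\<forall>x y. \<psi> (x + y) = \<psi> x + \<psi> y) \<and> (\<forall>x y. \<psi> (x * y) = \<psi> x * \<psi> y)"
proof -
  have key: "poly (mp D) \<omega>' = 0" if D: "poly (mp D) \<omega> = 0" for D
  proof -
    obtain S T where st: "D = G * S + T" "T = 0 \<or> degree T < degree G"
      using monic_div[OF G1] by blast
    have "poly (mp T) \<omega> = 0" using D G3 st(1) by (simp add: mp_add mp_mult)
    hence "\<forall>i. (of_int (coeff T i) :: 'F) = 0" using ind st(2) G2 by blast
    hence "(mp T :: 'F poly) = 0" by (intro poly_eqI) (simp add: coeff_map_poly)
    thus ?thesis using G4 st(1) by (simp add: mp_add mp_mult)
  qed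
  define \<psi> where "\<psi> x = poly (mp (SOME P. poly (mp P) \<omega> = x)) \<omega>'" for x
  have \<psi>_eq: "\<psi> x = poly (mp P) \<omega>'" if "poly (mp P) \<omega> = x" for x P
  proof -
    define P0 where "P0 = (SOME P. poly (mp P) \<omega> = x)"
    have "poly (mp P0) \<omega> = x" unfolding P0_def by (rule someI_ex) (rule surj)
    hence "poly (mp (P0 - P)) \<omega> = 0" using that by (simp add: mp_diff)
    hence "poly (mp (P0 - P)) \<omega>' = 0" by (rule key)
    thus ?thesis by (simp add: \<psi>_def P0_def mp_diff)
  qed
  show ?thesis
  proof (intro exI conjI allI)
    show "\<psi> 1 = 1" using \<psi>_eq[of 1 1] by simp
  next
    fix x y
    obtain P Q where P: "poly (mp P) \<omega> = x" and Q: "poly (mp Q) \<omega> = y" using surj by metis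
    show "\<psi> (x + y) = \<psi> x + \<psi> y"
      using \<psi>_eq[OF P] \<psi>_eq[OF Q] \<psi>_eq[of "P + Q" "x + y"] P Q by (simp add: mp_add)
    show "\<psi> (x * y) = \<psi> x * \<psi> y"
      using \<psi>_eq[OF P] \<psi>_eq[OF Q] \<psi>_eq[of "P * Q" "x * y"] P Q by (simp add: mp_mult)
  qed
qed


lemma card_unity_eq:
  fixes z :: "'a::{finite,field}"
  assumes "ordz z n"
  shows "card {y::'a. y ^ n = 1} = n"
proof (rule antisym)
  show "card {y::'a. y ^ n = 1} \<le> n" using assms card_unity_le by (auto simp: ordz_def)
  have sub: "(\<lambda>m. z ^ m) ` {..<n} \<subseteq> {y::'a. y ^ n = 1}"
  proof
    fix y assume "y \<in> (\<lambda>m. z ^ m) ` {..<n}"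
    then obtain m where "y = z ^ m" by blast
    hence "y ^ n = (z ^ n) ^ m" by (simp add: mult.commute flip: power_mult)
    thus "y \<in> {y::'a. y ^ n = 1}" using assms by (simp add: ordz_def)
  qed
  have "n = card ((\<lambda>m. z ^ m) ` {..<n})" using assms by (simp add: ordz_def card_image)
  also have "\<dots> \<le> card {y::'a. y ^ n = 1}" by (rule card_mono[OF _ sub]) simp
  finally show "n \<le> card {y::'a. y ^ n = 1}" .
qed

theorem mainTheorem2:
  fixes p a b c :: nat
  assumes "prime p" and "odd p"
    and "a > 0" and "b > 0" and "c > 0"
    and "primitive_divisor p a c"
    and "primitive_divisor p (a * b) (b * c)"
    and "odd (b * c)"
    and "card (UNIV :: 'F::{finite,field} set) = p ^ (a * b)"
    and "card (UNIV :: 'K::{finite,field} set) = p ^ a"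
  shows "digraph_iso
           (gpaley_arc ((p ^ (a * b) - 1) div (b * c)) :: 'F \<Rightarrow> 'F \<Rightarrow> bool)
           (cart_power_verts b)
           (cart_power_arc b (gpaley_arc ((p ^ a - 1) div c) :: 'K \<Rightarrow> 'K \<Rightarrow> bool))"
proof -
  note pr = assms(1) and a0 = assms(3) and b0 = assms(4) and c0 = assms(5)
  note primK = assms(6)[unfolded primitive_divisor_def]
  note primF = assms(7)[unfolded primitive_divisor_def]
  note cardF = assms(9) and cardK = assms(10)
  have p0: "p > 0" using pr prime_gt_0_nat by blast
  have charF: "CHAR('F) = p" using CHAR_eq[OF pr cardF] .
  have charK: "CHAR('K) = p" using CHAR_eq[OF pr cardK] .
  define kK where "kK = (p ^ a - 1) div c"
  define kF where "kF = (p ^ (a * b) - 1) div (b * c)"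
  have cK: "c dvd p ^ a - 1" using primK by blast
  have cF: "b * c dvd p ^ (a * b) - 1" using primF by blast
  have kKc: "kK * c = card (UNIV :: 'K set) - 1" unfolding kK_def cardK by (rule dvd_div_mult_self[OF cK])
  have kFc: "kF * (b * c) = card (UNIV :: 'F set) - 1" unfolding kF_def cardF by (rule dvd_div_mult_self[OF cF])
  obtain \<omega> :: 'K where o\<omega>: "ordz \<omega> c"
    and RK0: "\<forall>y::'K. (\<exists>s. s \<noteq> 0 \<and> y = s ^ kK) \<longleftrightarrow> y ^ c = 1"
    and genK0: "\<forall>y::'K. y ^ c = 1 \<longrightarrow> (\<exists>m. y = \<omega> ^ m)"
    using roots_of_unity[OF kKc c0] by (elim exE conjE)
  note RK = RK0[rule_format] and genK = genK0[rule_format]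
  have bc0: "b * c > 0" using b0 c0 by simp
  obtain \<zeta> :: 'F where o\<zeta>: "ordz \<zeta> (b * c)"
    and RF0: "\<forall>y::'F. (\<exists>s. s \<noteq> 0 \<and> y = s ^ kF) \<longleftrightarrow> y ^ (b * c) = 1"
    and genF0: "\<forall>y::'F. y ^ (b * c) = 1 \<longrightarrow> (\<exists>m. y = \<zeta> ^ m)"
    using roots_of_unity[OF kFc bc0] by (elim exE conjE)
  note RF = RF0[rule_format] and genF = genF0[rule_format]
  have prK: "prime CHAR('K)" and prF: "prime CHAR('F)" using charK charF pr by auto
  have frobK: "(x + y) ^ p = x ^ p + y ^ p" for x y :: 'K
    using freshmans_dream[OF prK refl, of x y] by (simp add: charK)
  have frobF: "(x + y) ^ (p ^ a) = x ^ (p ^ a) + y ^ (p ^ a)" for x y :: 'F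
    by (rule freshmans_dream'[OF prF]) (simp add: charF)
  have fixK: "(of_int n :: 'K) ^ p = of_int n" for n using frob_int[OF prK, of n] by (simp add: charK)
  have copK: "coprime c p"
  proof -
    have h: "coprime (p ^ a - 1) (p ^ a)" by (rule coprime_diff_one_left_nat) (use p0 in simp)
    hence "coprime (p ^ a - 1) p" using a0 by (auto simp: coprime_power_right_iff)
    thus ?thesis using coprime_divisors[OF _ dvd_refl, of c "p ^ a - 1" p] primK by blast
  qed
  have copF: "coprime (b * c) (p ^ a)"
  proof -
    have h: "coprime (p ^ (a * b) - 1) (p ^ (a * b))" by (rule coprime_diff_one_left_nat) (use p0 in simp)
    hence "coprime (p ^ (a * b) - 1) p" using a0 b0 by (auto simp: coprime_power_right_iff)
    hence "coprime (b * c) p" using coprime_divisors[OF _ dvd_refl, of "b * c" "p ^ (a * b) - 1" p] primF by blast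
    thus ?thesis by simp
  qed
  have distK: "inj_on (\<lambda>t. \<omega> ^ (p ^ t)) {..<a}"
    by (rule frob_dist[OF o\<omega> copK p0]) (use primK in auto)
  have distF: "inj_on (\<lambda>t. \<zeta> ^ ((p ^ a) ^ t)) {..<b}"
  proof (rule frob_dist[OF o\<zeta> copF])
    show "p ^ a > 0" using p0 by simp
    fix u assume u: "1 \<le> u" "u < b"
    have "1 \<le> a * u" "a * u < a * b" using u a0 by auto
    hence "\<not> b * c dvd p ^ (a * u) - 1" using primF by blast
    thus "\<not> b * c dvd (p ^ a) ^ u - 1" by (simp add: power_mult)
  qed
  have indK: "\<forall>i<a. l i = 0" if "\<And>i. i < a \<Longrightarrow> l i ^ p = l i" "(\<Sum>i<a. l i * \<omega> ^ i) = 0" for l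
    using indep[OF p0 frobK that(1) distK that(2)] by blast

  define E where "E = (PiE {..<a} (\<lambda>_. {..<p}))"
  define B where "B e = (\<Sum>i<a. of_nat (e i) * \<omega> ^ i)" for e :: "nat \<Rightarrow> nat"
  have injB: "inj_on B E"
  proof (rule inj_onI)
    fix e e' assume e: "e \<in> E" and e': "e' \<in> E" and eq: "B e = B e'"
    define l where "l i = (of_int (int (e i) - int (e' i)) :: 'K)" for i
    have "(\<Sum>i<a. l i * \<omega> ^ i) = B e - B e'"
      by (simp add: B_def l_def sum_subtractf algebra_simps)
    hence sm: "(\<Sum>i<a. l i * \<omega> ^ i) = 0" using eq by simp
    have fx: "l i ^ p = l i" if "i < a" for i unfolding l_def by (rule fixK)
    have l0: "\<forall>i<a. l i = 0" by (rule indK[of l, OF fx sm])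
    show "e = e'"
    proof
      fix i show "e i = e' i"
      proof (cases "i < a")
        case True
        hence "(of_nat (e i) :: 'K) = of_nat (e' i)" using l0 by (simp add: l_def)
        hence "[e i = e' i] (mod p)" using charK by (simp add: of_nat_eq_iff_cong_CHAR)
        moreover have "e i < p" "e' i < p" using e e' True by (auto simp: E_def)
        ultimately show ?thesis by (rule cong_less_modulus_unique_nat)
      next
        case False
        have "i \<notin> {..<a}" using False by simp
        thus ?thesis using PiE_arb[OF e[unfolded E_def]] PiE_arb[OF e'[unfolded E_def]] by metis
      qed
    qed
  qed
  have cardE: "card E = card (UNIV :: 'K set)" using cardK by (simp add: E_def card_PiE)
  have imB: "B ` E = UNIV"
  proof (rule card_subset_eq)
    show "card (B ` E) = card (UNIV :: 'K set)" using card_image[OF injB] cardE by simp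
  qed simp_all
  have surj: "\<exists>P. poly (mp P) \<omega> = x" for x
  proof -
    obtain e where "x = B e" using imB by (metis UNIV_I imageE)
    hence "x = poly (mp (\<Sum>i<a. Polynomial.monom (int (e i)) i)) \<omega>"
      unfolding B_def mp_sum_monom by simp
    thus ?thesis by blast
  qed
  obtain e0 where e0: "\<omega> ^ a = B e0" using imB by (metis UNIV_I imageE)
  define S0 where "S0 = (\<Sum>i<a. Polynomial.monom (int (e0 i)) i)"
  define G where "G = Polynomial.monom 1 a - S0"
  have cS0: "coeff S0 j = (if j < a then int (e0 j) else 0)" for j
    by (simp add: S0_def coeff_sum coeff_monom)
  have cG: "coeff G j = (if j = a then 1 else if j < a then - int (e0 j) else 0)" for j
    by (simp add: G_def cS0 coeff_monom)
  have degG: "degree G = a"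
  proof (rule antisym)
    show "degree G \<le> a" by (rule degree_le) (simp add: cG)
    show "a \<le> degree G" by (rule le_degree) (simp add: cG)
  qed
  have lcG: "lead_coeff G = 1" using degG cG by simp
  have GK: "poly (mp G) \<omega> = 0"
  proof -
    have "poly (mp S0) \<omega> = B e0" unfolding S0_def mp_sum_monom B_def by simp
    moreover have "poly (mp (Polynomial.monom 1 a)) \<omega> = \<omega> ^ a" by (simp add: map_poly_monom poly_monom)
    ultimately show ?thesis using e0 by (simp add: G_def mp_diff)
  qed
  have indT: "\<forall>i. (of_int (coeff T i) :: 'F) = 0" if T: "T = 0 \<or> degree T < a" "poly (mp T) \<omega> = 0" for T
  proof
    fix i
    show "(of_int (coeff T i) :: 'F) = 0"
    proof (cases "i < a")
      case True
      have sm: "(\<Sum>i<a. of_int (coeff T i) * \<omega> ^ i) = 0" using T(2) poly_mp_small[OF T(1), where x=\<omega>] by simp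
      have fx: "(of_int (coeff T i) :: 'K) ^ p = of_int (coeff T i)" if "i < a" for i by (rule fixK)
      have "\<forall>i<a. (of_int (coeff T i) :: 'K) = 0" by (rule indK[OF fx sm])
      hence "(of_int (coeff T i)::'K) = 0" using True by blast
      hence "int CHAR('K) dvd coeff T i" by (simp only: of_int_eq_0_iff_char_dvd)
      hence d: "int p dvd coeff T i" by (simp only: charK)
      have "int CHAR('F) dvd coeff T i" using d by (simp only: charF)
      thus ?thesis by (simp only: of_int_eq_0_iff_char_dvd)
    next
      case False
      hence "coeff T i = 0" using T(1) by (cases "T = 0") (auto intro!: coeff_eq_0)
      thus ?thesis by simp
    qed
  qed

  define \<theta> where "\<theta> = \<zeta> ^ b"
  have o\<theta>: "ordz \<theta> c"
    unfolding ordz_def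
  proof (intro conjI)
    show "0 < c" by fact
    show "\<theta> ^ c = 1" using o\<zeta> by (simp add: \<theta>_def ordz_def flip: power_mult)
    show "inj_on (\<lambda>i. \<theta> ^ i) {..<c}"
    proof (rule inj_onI)
      fix i j assume ij: "i \<in> {..<c}" "j \<in> {..<c}" "\<theta> ^ i = \<theta> ^ j"
      hence "\<zeta> ^ (b * i) = \<zeta> ^ (b * j)" by (simp add: \<theta>_def power_mult)
      hence "(b * i) mod (b * c) = (b * j) mod (b * c)" using ordz_eq[OF o\<zeta>] by blast
      moreover have "b * i < b * c" "b * j < b * c" using ij b0 by auto
      ultimately show "i = j" using b0 by simp
    qed
  qed
  have muF: "card {y::'F. y ^ c = 1} = c" by (rule card_unity_eq[OF o\<theta>])
  have muK: "card {y::'K. y ^ c = 1} = c" by (rule card_unity_eq[OF o\<omega>])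
  define X where "X = Polynomial.monom (1::int) c - 1"
  obtain S T where ST: "X = G * S + T" "T = 0 \<or> degree T < degree G" using monic_div[OF lcG] by blast
  have XK: "poly (mp X) \<omega> = 0" using o\<omega> by (simp add: X_def mp_diff map_poly_monom poly_monom ordz_def)
  have "poly (mp T) \<omega> = 0" using XK GK ST(1) by (simp add: mp_add mp_mult)
  hence "\<forall>i. (of_int (coeff T i)::'F) = 0" using indT ST(2) degG by simp
  hence T0: "(mp T :: 'F poly) = 0" by (intro poly_eqI) (simp add: coeff_map_poly)
  have XF: "(mp X :: 'F poly) = mp G * mp S" using ST(1) T0 by (simp add: mp_add mp_mult)
  have cmG: "coeff (mp G :: 'F poly) j = of_int (coeff G j)" for j by (simp add: coeff_map_poly)
  have degGF: "degree (mp G :: 'F poly) = a"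
  proof (rule antisym)
    show "degree (mp G :: 'F poly) \<le> a" by (rule degree_le) (simp add: cmG cG)
    show "a \<le> degree (mp G :: 'F poly)" by (rule le_degree) (simp add: cmG cG)
  qed
  have cX: "coeff X j = (if j = c then 1 else 0) - (if j = 0 then 1 else 0)" for j
    by (simp add: X_def coeff_monom coeff_1)
  have cmX: "coeff (mp X :: 'F poly) j = of_int (coeff X j)" for j by (simp add: coeff_map_poly)
  have degXF: "degree (mp X :: 'F poly) = c"
  proof (rule antisym)
    show "degree (mp X :: 'F poly) \<le> c" by (rule degree_le) (use c0 in \<open>simp add: cmX cX\<close>)
    show "c \<le> degree (mp X :: 'F poly)" by (rule le_degree) (use c0 in \<open>simp add: cmX cX\<close>)
  qed
  have mGF0: "(mp G :: 'F poly) \<noteq> 0" using degGF a0 by auto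
  have mSF0: "(mp S :: 'F poly) \<noteq> 0" using XF degXF c0 by auto
  have degS: "degree (mp S :: 'F poly) = c - a"
    using XF degXF degGF degree_mult_eq[OF mGF0 mSF0] by simp
  have "\<exists>w::'F. poly (mp G) w = 0"
  proof (rule ccontr)
    assume no: "\<not> (\<exists>w::'F. poly (mp G) w = 0)"
    have sub: "{y::'F. y ^ c = 1} \<subseteq> {x. poly (mp S :: 'F poly) x = 0}"
    proof
      fix y :: 'F assume "y \<in> {y::'F. y ^ c = 1}"
      hence "poly (mp X :: 'F poly) y = 0" by (simp add: X_def mp_diff map_poly_monom poly_monom)
      hence "poly (mp G) y * poly (mp S) y = 0" using XF by simp
      thus "y \<in> {x. poly (mp S :: 'F poly) x = 0}" using no by auto
    qed
    have "c \<le> card {x. poly (mp S :: 'F poly) x = 0}"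
      using card_mono[OF poly_roots_finite[OF mSF0] sub] muF by simp
    also have "\<dots> \<le> c - a" using card_poly_roots_bound[OF mSF0] degS by simp
    finally show False using a0 c0 by simp
  qed
  then obtain \<omega>' :: 'F where rt: "poly (mp G) \<omega>' = 0" by blast
  obtain \<psi> :: "'K \<Rightarrow> 'F" where \<psi>1: "\<psi> 1 = 1" and \<psi>add: "\<And>x y. \<psi> (x + y) = \<psi> x + \<psi> y"
    and \<psi>mult: "\<And>x y. \<psi> (x * y) = \<psi> x * \<psi> y"
    using embed[OF surj lcG degG GK rt indT] by blast
  have "\<psi> 0 = \<psi> 0 + \<psi> 0" using \<psi>add[of 0 0] by (simp only: add_0_left)
  hence \<psi>0: "\<psi> 0 = 0" by (metis add_cancel_left_right)
  have \<psi>minus: "\<psi> (x - y) = \<psi> x - \<psi> y" for x y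
    using \<psi>add[of "x - y" y] by (simp add: algebra_simps)
  have \<psi>pow: "\<psi> (x ^ n) = \<psi> x ^ n" for x n
    by (induct n) (simp_all add: \<psi>1 \<psi>mult)
  have \<psi>zero: "x = 0" if "\<psi> x = 0" for x
  proof (rule ccontr)
    assume "x \<noteq> 0"
    hence "\<psi> (x * inverse x) = 1" by (simp add: \<psi>1)
    thus False using that by (simp add: \<psi>mult)
  qed
  have \<psi>inj: "inj \<psi>"
  proof (rule injI)
    fix x y assume "\<psi> x = \<psi> y"
    hence "\<psi> (x - y) = 0" by (simp add: \<psi>minus)
    thus "x = y" using \<psi>zero by fastforce
  qed
  have \<psi>mu: "\<psi> ` {e::'K. e ^ c = 1} = {y::'F. y ^ c = 1}"
  proof (rule card_seteq)
    show "finite {y::'F. y ^ c = 1}" by simp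
    show "\<psi> ` {e::'K. e ^ c = 1} \<subseteq> {y::'F. y ^ c = 1}"
      by (auto simp: \<psi>1 simp flip: \<psi>pow)
    have "card (\<psi> ` {e::'K. e ^ c = 1}) = c"
      using muK card_image[OF inj_on_subset[OF \<psi>inj]] by simp
    thus "card {y::'F. y ^ c = 1} \<le> card (\<psi> ` {e::'K. e ^ c = 1})" using muF by simp
  qed
  have fixF: "\<psi> x ^ (p ^ a) = \<psi> x" for x
  proof -
    have "x ^ (p ^ a) = x" using field_pow_card[of x] cardK by simp
    thus ?thesis by (simp flip: \<psi>pow)
  qed

  have pa0: "p ^ a > 0" using p0 by simp
  define \<Phi> where "\<Phi> v = (\<Sum>i<b. \<psi> (v i) * \<zeta> ^ i)" for v :: "nat \<Rightarrow> 'K"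
  have \<Phi>diff: "\<Phi> v - \<Phi> w = \<Phi> (\<lambda>i. v i - w i)" for v w
    by (simp add: \<Phi>_def \<psi>minus sum_subtractf algebra_simps)
  have \<Phi>inj: "\<forall>i<b. v i = w i" if eq: "\<Phi> v = \<Phi> w" for v w
  proof -
    define l where "l i = \<psi> (v i - w i)" for i
    have sm: "(\<Sum>i<b. l i * \<zeta> ^ i) = 0" using \<Phi>diff[of v w] eq by (simp add: \<Phi>_def l_def)
    have fx: "l i ^ (p ^ a) = l i" if "i < b" for i unfolding l_def by (rule fixF)
    have l0: "\<forall>i<b. l i = 0" by (rule indep[OF pa0 frobF fx distF sm])
    show ?thesis
    proof (intro allI impI)
      fix i assume "i < b"
      hence "\<psi> (v i - w i) = 0" using l0 by (simp add: l_def)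
      hence "v i - w i = 0" by (rule \<psi>zero)
      thus "v i = w i" by simp
    qed
  qed
  have \<Phi>single: "\<Phi> (\<lambda>i. if i = j then e else 0) = \<psi> e * \<zeta> ^ j" if "j < b" for j e
  proof -
    have "\<Phi> (\<lambda>i. if i = j then e else 0) = (\<Sum>i<b. if i = j then \<psi> e * \<zeta> ^ i else 0)"
      unfolding \<Phi>_def by (intro sum.cong refl) (simp add: \<psi>0)
    also have "\<dots> = \<psi> e * \<zeta> ^ j" using that by (simp add: sum.delta)
    finally show ?thesis .
  qed
  have key: "\<Phi> d ^ (b * c) = 1 \<longleftrightarrow> (\<exists>j<b. d j ^ c = 1 \<and> (\<forall>i<b. i \<noteq> j \<longrightarrow> d i = 0))" for d
  proof
    assume "\<Phi> d ^ (b * c) = 1"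
    then obtain m where m: "\<Phi> d = \<zeta> ^ m" using genF by blast
    define j where "j = m mod b"
    define r where "r = m div b"
    have jb: "j < b" using b0 by (simp add: j_def)
    have "\<zeta> ^ m = \<zeta> ^ j * \<theta> ^ r"
    proof -
      have "m = j + b * r" by (simp add: j_def r_def)
      hence "\<zeta> ^ m = \<zeta> ^ j * \<zeta> ^ (b * r)" by (simp add: power_add)
      thus ?thesis by (simp add: \<theta>_def power_mult)
    qed
    moreover have "(\<theta> ^ r) ^ c = 1"
    proof -
      have "(\<theta> ^ r) ^ c = (\<theta> ^ c) ^ r" by (simp only: mult.commute flip: power_mult)
      thus ?thesis using o\<theta> by (simp add: ordz_def)
    qed
    hence "\<theta> ^ r \<in> \<psi> ` {e::'K. e ^ c = 1}" unfolding \<psi>mu by (rule CollectI)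
    then obtain e where e2: "\<theta> ^ r = \<psi> e" and e1: "e \<in> {e::'K. e ^ c = 1}" by (rule imageE)
    have e: "e ^ c = 1" "\<psi> e = \<theta> ^ r" using e1 e2 by simp_all
    ultimately have "\<Phi> (\<lambda>i. if i = j then e else 0) = \<Phi> d"
      using \<Phi>single[OF jb, of e] m e(2) by (simp add: mult.commute)
    hence dd: "\<forall>i<b. (if i = j then e else 0) = d i" by (rule \<Phi>inj)
    show "\<exists>j<b. d j ^ c = 1 \<and> (\<forall>i<b. i \<noteq> j \<longrightarrow> d i = 0)"
    proof (intro exI conjI allI impI)
      show "j < b" by (rule jb)
      show "d j ^ c = 1" using dd jb e by force
      fix i assume "i < b" "i \<noteq> j" thus "d i = 0" using dd by force
    qed
  next
    assume "\<exists>j<b. d j ^ c = 1 \<and> (\<forall>i<b. i \<noteq> j \<longrightarrow> d i = 0)"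
    then obtain j where j: "j < b" "d j ^ c = 1" "\<forall>i<b. i \<noteq> j \<longrightarrow> d i = 0" by blast
    have "\<Phi> d = \<Phi> (\<lambda>i. if i = j then d j else 0)"
      unfolding \<Phi>_def using j(3) by (intro sum.cong refl) auto
    also have "\<dots> = \<psi> (d j) * \<zeta> ^ j" by (rule \<Phi>single[OF j(1)])
    finally have "\<Phi> d ^ (b * c) = \<psi> (d j) ^ (c * b) * (\<zeta> ^ (b * c)) ^ j"
      by (simp add: power_mult_distrib mult.commute flip: power_mult)
    also have "\<psi> (d j) ^ (c * b) = 1" using j(2) by (simp add: power_mult \<psi>1 flip: \<psi>pow)
    also have "\<zeta> ^ (b * c) = 1" using o\<zeta> by (simp add: ordz_def)
    finally show "\<Phi> d ^ (b * c) = 1" by simp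
  qed
  define V where "V = (cart_power_verts b :: (nat \<Rightarrow> 'K) set)"
  have injV: "inj_on \<Phi> V"
  proof (rule inj_onI)
    fix v w assume v: "v \<in> V" and w: "w \<in> V" and eq: "\<Phi> v = \<Phi> w"
    have vw: "\<forall>i<b. v i = w i" by (rule \<Phi>inj[OF eq])
    show "v = w"
    proof
      fix i show "v i = w i"
      proof (cases "i < b")
        case True thus ?thesis using vw by blast
      next
        case False
        have "i \<notin> {..<b}" using False by simp
        thus ?thesis using PiE_arb[OF v[unfolded V_def cart_power_verts_def]]
            PiE_arb[OF w[unfolded V_def cart_power_verts_def]] by metis
      qed
    qed
  qed
  have cardV: "card V = card (UNIV :: 'F set)"
    using cardK cardF by (simp add: V_def cart_power_verts_def card_PiE power_mult)
  have imV: "\<Phi> ` V = UNIV"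
  proof (rule card_subset_eq)
    show "card (\<Phi> ` V) = card (UNIV :: 'F set)" using card_image[OF injV] cardV by simp
  qed simp_all
  have bijP: "bij_betw \<Phi> V UNIV" using injV imV by (simp add: bij_betw_def)
  define f where "f = inv_into V \<Phi>"
  have bijf: "bij_betw f UNIV V" unfolding f_def by (rule bij_betw_inv_into[OF bijP])
  have \<Phi>f: "\<Phi> (f u) = u" for u unfolding f_def by (rule f_inv_into_f[where f=\<Phi> and A=V]) (simp add: imV)
  have arcK: "cart_power_arc b (gpaley_arc kK) x y \<longleftrightarrow>
      (\<exists>j<b. (y j - x j) ^ c = 1 \<and> (\<forall>i<b. i \<noteq> j \<longrightarrow> x i = y i))" for x y :: "nat \<Rightarrow> 'K"
  proof -
    have ga: "gpaley_arc kK u w \<longleftrightarrow> (w - u) ^ c = 1" for u w :: 'K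
      unfolding gpaley_arc_def by (rule RK)
    have "cart_power_arc b (gpaley_arc kK) x y \<longleftrightarrow>
       (\<exists>!j. j < b \<and> (y j - x j) ^ c = 1 \<and> (\<forall>i<b. i \<noteq> j \<longrightarrow> x i = y i))"
      unfolding cart_power_arc_def ga ..
    also have "\<dots> \<longleftrightarrow> (\<exists>j<b. (y j - x j) ^ c = 1 \<and> (\<forall>i<b. i \<noteq> j \<longrightarrow> x i = y i))"
    proof
      assume "\<exists>!j. j < b \<and> (y j - x j) ^ c = 1 \<and> (\<forall>i<b. i \<noteq> j \<longrightarrow> x i = y i)"
      thus "\<exists>j<b. (y j - x j) ^ c = 1 \<and> (\<forall>i<b. i \<noteq> j \<longrightarrow> x i = y i)"
      proof (rule ex1E)
        fix j assume H: "j < b \<and> (y j - x j) ^ c = 1 \<and> (\<forall>i<b. i \<noteq> j \<longrightarrow> x i = y i)"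
        show "\<exists>j<b. (y j - x j) ^ c = 1 \<and> (\<forall>i<b. i \<noteq> j \<longrightarrow> x i = y i)"
          by (rule exI[of _ j], rule H)
      qed
    next
      assume "\<exists>j<b. (y j - x j) ^ c = 1 \<and> (\<forall>i<b. i \<noteq> j \<longrightarrow> x i = y i)"
      then obtain j where j: "j < b" "(y j - x j) ^ c = 1" "\<forall>i<b. i \<noteq> j \<longrightarrow> x i = y i" by blast
      show "\<exists>!j. j < b \<and> (y j - x j) ^ c = 1 \<and> (\<forall>i<b. i \<noteq> j \<longrightarrow> x i = y i)"
      proof (rule ex1I[of _ j])
        show "j < b \<and> (y j - x j) ^ c = 1 \<and> (\<forall>i<b. i \<noteq> j \<longrightarrow> x i = y i)" using j by blast
        fix j' assume j': "j' < b \<and> (y j' - x j') ^ c = 1 \<and> (\<forall>i<b. i \<noteq> j' \<longrightarrow> x i = y i)"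
        show "j' = j"
        proof (rule ccontr)
          assume "j' \<noteq> j"
          hence "x j' = y j'" using j(3) j' by blast
          thus False using j' c0 by (simp add: power_0_left)
        qed
      qed
    qed
    finally show ?thesis .
  qed
  have arc: "gpaley_arc kF u v \<longleftrightarrow> cart_power_arc b (gpaley_arc kK) (f u) (f v)" for u v :: 'F
  proof -
    define d where "d = (\<lambda>i. f v i - f u i)"
    have vu: "v - u = \<Phi> d" using \<Phi>diff[of "f v" "f u"] \<Phi>f[of u] \<Phi>f[of v] by (simp add: d_def)
    have "gpaley_arc kF u v \<longleftrightarrow> (v - u) ^ (b * c) = 1"
      unfolding gpaley_arc_def by (rule RF)
    also have "\<dots> \<longleftrightarrow> (\<exists>j<b. d j ^ c = 1 \<and> (\<forall>i<b. i \<noteq> j \<longrightarrow> d i = 0))" unfolding vu by (rule key)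
    also have "\<dots> \<longleftrightarrow> cart_power_arc b (gpaley_arc kK) (f u) (f v)"
    proof -
      have dz: "(d i = 0) = (f u i = f v i)" for i by (auto simp: d_def)
      show ?thesis unfolding arcK dz unfolding d_def ..
    qed
    finally show ?thesis .
  qed
  show ?thesis
    unfolding digraph_iso_def kF_def[symmetric] kK_def[symmetric] V_def[symmetric]
    using bijf arc by blast
qed
end
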